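(* Let $N\ge1$ and let $\{a_n\}_{n=0}^{N-1},\{b_n\}_{n=0}^{N-1},\{c_n\}_{n=1}^{N}$ be real sequences with $c_n>0$, $a_{N-1}=0$, $b_{N-1}=\tfrac12$, $c_N=1$, satisfying for $n=1,\dots,N-1$ $$a_{n-1}=a_n\Big(\frac{1}{c_n^2+1}\Big)^{1/2}+b_n\Big(\frac{1}{c_n^2+1}\Big)^{3/2}c_n^2,\quad b_{n-1}=b_n\Big(\frac{1}{c_n^2+1}\Big)^{3/2}+\frac{c_n}{c_n^2+1},\quad a_n+b_n=\frac{1-c_n^2}{c_n(1+c_n^2)^{1/2}}.$$ Then for each $n\in\{2,\dots,N\}$, $c_{n-1}$ is the unique root in $(0,1)$ of the equation in $x$ $$(1-x^2)\,c_n(1+c_n^2)=x(1+x^2)^{1/2},$$ and $c_N>c_{N-1}>\cdots>c_2>c_1$.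
   Context: These sequences describe the equilibrium of the risk-neutral insider model (Model 2) of an $N$-period Kyle-type insider trading model, in which the insider's trading intensity in period $n$ is $c_n\sigma_u\Delta t_N^{1/2}\Sigma_{n-1}^{-1/2}$; the claim concerns only the sequences as defined here. *)

theory Defs
  imports Complex_Main
begin

end

theory Submission
  imports Defs
begin

lemma powr32: "t > 0 \<Longrightarrow> (t::real) powr (3/2) = t * sqrt t"
proof -
  assume t: "t > 0"
  have "t powr (3/2) = t powr (1 + 1/2)" by simp
  also have "\<dots> = t powr 1 * t powr (1/2)" by (rule powr_add)
  also have "\<dots> = t * sqrt t" using t by (simp add: powr_half_sqrt)
  finally show ?thesis .
qed

lemma sum_step:
  fixes A B C :: real
  assumes C: "C > 0"
  shows "A * sqrt (1 / (C ^ 2 + 1)) + B * (1 / (C ^ 2 + 1)) powr (3 / 2) * C ^ 2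
       + (B * (1 / (C ^ 2 + 1)) powr (3 / 2) + C / (C ^ 2 + 1))
       = (A + B) * sqrt (1 / (C ^ 2 + 1)) + C / (C^2 + 1)"
proof -
  define t where "t = 1 / (C^2 + 1)"
  have "C^2 + 1 > 0" by (simp add: add_nonneg_pos)
  hence t: "t > 0" unfolding t_def by simp
  have "B * t powr (3/2) * C^2 + B * t powr (3/2) = B * sqrt t * (t * (C^2+1))"
    using powr32[OF t] by (simp add: algebra_simps)
  also have "t * (C^2+1) = 1" unfolding t_def using \<open>C^2 + 1 > 0\<close> by simp
  finally have "B * t powr (3/2) * C^2 + B * t powr (3/2) = B * sqrt t" by simp
  then show ?thesis unfolding t_def[symmetric] by (simp add: algebra_simps)
qed

lemma step_val:
  fixes C :: real
  assumes C: "C > 0"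
  shows "((1 - C^2) / (C * sqrt (1 + C^2))) * sqrt (1 / (C ^ 2 + 1)) + C / (C^2 + 1)
       = 1 / (C * (1 + C^2))"
proof -
  have p: "1 + C^2 > 0" by (simp add: add_pos_nonneg)
  have s: "sqrt (1 / (C ^ 2 + 1)) = 1 / sqrt (1 + C^2)" by (simp add: real_sqrt_divide add.commute)
  have ss: "sqrt (1 + C^2) * sqrt (1 + C^2) = 1 + C^2" using p by simp
  have sp: "sqrt (1 + C^2) > 0" using p by simp
  have "((1 - C^2) / (C * sqrt (1 + C^2))) * (1 / sqrt (1 + C^2))
        = (1 - C^2) / (C * (sqrt (1 + C^2) * sqrt (1 + C^2)))" by (simp add: algebra_simps)
  also have "\<dots> = (1 - C^2) / (C * (1 + C^2))" using ss by simp
  finally have e1: "((1 - C^2) / (C * sqrt (1 + C^2))) * (1 / sqrt (1 + C^2)) = (1 - C^2) / (C * (1 + C^2))" .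
  have e2: "C / (C^2 + 1) = C^2 / (C * (1 + C^2))" using C by (simp add: power2_eq_square add.commute)
  have "(1 - C^2) / (C * (1 + C^2)) + C^2 / (C * (1 + C^2)) = 1 / (C * (1 + C^2))"
    by (simp add: add_divide_distrib[symmetric])
  then show ?thesis unfolding s e1 e2 .
qed

lemma aux_lt: "(q::real) \<ge> 0 \<Longrightarrow> p > 0 \<Longrightarrow> 1 - p - q < 1"
  by linarith

lemma mono_aux:
  fixes x y :: real
  assumes "0 < x" "x < y"
  shows "x * sqrt (1 + x^2) < y * sqrt (1 + y^2)"
proof -
  have "x^2 < y^2" using assms by (simp add: power_strict_mono)
  hence "sqrt (1 + x^2) < sqrt (1 + y^2)" by simp
  moreover have "sqrt (1 + x^2) > 0" by (simp add: add_pos_nonneg)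
  ultimately show ?thesis using assms by (simp add: mult_strict_mono)
qed

theorem proposition4:
  fixes N :: nat and a b c :: "nat \<Rightarrow> real"
  assumes N: "N \<ge> 1"
    and cpos: "\<And>n. 1 \<le> n \<Longrightarrow> n \<le> N \<Longrightarrow> c n > 0"
    and aN: "a (N - 1) = 0"
    and bN: "b (N - 1) = 1 / 2"
    and cN: "c N = 1"
    and rec_a: "\<And>n. 1 \<le> n \<Longrightarrow> n \<le> N - 1 \<Longrightarrow>
      a (n - 1) = a n * sqrt (1 / (c n ^ 2 + 1))
                  + b n * (1 / (c n ^ 2 + 1)) powr (3 / 2) * c n ^ 2"
    and rec_b: "\<And>n. 1 \<le> n \<Longrightarrow> n \<le> N - 1 \<Longrightarrow>
      b (n - 1) = b n * (1 / (c n ^ 2 + 1)) powr (3 / 2) + c n / (c n ^ 2 + 1)"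
    and rec_ab: "\<And>n. 1 \<le> n \<Longrightarrow> n \<le> N - 1 \<Longrightarrow>
      a n + b n = (1 - c n ^ 2) / (c n * sqrt (1 + c n ^ 2))"
  shows "(\<forall>n \<in> {2..N}.
            c (n - 1) \<in> {0<..<1}
          \<and> (1 - c (n - 1) ^ 2) * c n * (1 + c n ^ 2) = c (n - 1) * sqrt (1 + c (n - 1) ^ 2)
          \<and> (\<forall>x \<in> {0<..<1::real}.
                (1 - x ^ 2) * c n * (1 + c n ^ 2) = x * sqrt (1 + x ^ 2) \<longrightarrow> x = c (n - 1)))
       \<and> (\<forall>n \<in> {2..N}. c (n - 1) < c n)"
proof -
  have L1: "a (n - 1) + b (n - 1) = 1 / (c n * (1 + c n ^ 2))" if n: "n \<in> {2..N}" for n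
  proof (cases "n = N")
    case True
    then show ?thesis using aN bN cN by simp
  next
    case False
    have "a (n - 1) + b (n - 1) = (a n + b n) * sqrt (1 / (c n ^ 2 + 1)) + c n / (c n^2 + 1)"
      using rec_a[of n] rec_b[of n] sum_step[of "c n" "a n" "b n"] cpos[of n] n False by auto
    also have "\<dots> = 1 / (c n * (1 + c n ^ 2))"
      using rec_ab[of n] step_val[of "c n"] cpos[of n] n False by auto
    finally show ?thesis .
  qed
  have EQ: "(1 - c (n - 1) ^ 2) * c n * (1 + c n ^ 2) = c (n - 1) * sqrt (1 + c (n - 1) ^ 2)"
    and P: "0 < c (n-1)" "c (n-1) < 1"
    if n: "n \<in> {2..N}" for n
  proof -
    let ?x = "c (n - 1)"
    have x: "?x > 0" using cpos[of "n-1"] n by auto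
    have cn: "c n > 0" using cpos[of n] n by auto
    have r: "1 + c n ^ 2 > 0" by (simp add: add_pos_nonneg)
    have q: "sqrt (1 + ?x ^ 2) > 0" by (simp add: add_pos_nonneg)
    have "(1 - ?x ^ 2) / (?x * sqrt (1 + ?x ^ 2)) = 1 / (c n * (1 + c n ^ 2))"
      using L1[OF n] rec_ab[of "n-1"] n by auto
    then have "(1 - ?x ^ 2) * (c n * (1 + c n ^ 2)) = 1 * (?x * sqrt (1 + ?x ^ 2))"
      using x cn r q by (subst (asm) frac_eq_eq) auto
    then show e: "(1 - ?x ^ 2) * c n * (1 + c n ^ 2) = ?x * sqrt (1 + ?x ^ 2)"
      by (simp add: algebra_simps)
    show "0 < ?x" by (rule x)
    have e': "(1 - ?x ^ 2) * (c n * (1 + c n ^ 2)) = ?x * sqrt (1 + ?x ^ 2)" using e by (simp only: mult.assoc)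
    have "?x * sqrt (1 + ?x ^ 2) > 0" using x q by simp
    hence "(1 - ?x ^ 2) * (c n * (1 + c n ^ 2)) > 0" using e' by simp
    moreover have "c n * (1 + c n ^ 2) > 0" using cn r by simp
    ultimately have "1 - ?x^2 > 0" by (rule zero_less_mult_pos2)
    hence "?x^2 < 1^2" by simp
    thus "?x < 1" by (rule power_less_imp_less_base) simp
  qed
  have U: "x = c (n - 1)"
    if n: "n \<in> {2..N}" and x: "x \<in> {0<..<1::real}"
      and ex: "(1 - x ^ 2) * c n * (1 + c n ^ 2) = x * sqrt (1 + x ^ 2)" for n x
  proof (rule ccontr)
    assume ne: "x \<noteq> c (n - 1)"
    let ?y = "c (n - 1)"
    have K: "c n * (1 + c n ^ 2) > 0" using cpos[of n] n by (simp add: add_pos_nonneg)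
    show False
    proof (cases "x < ?y")
      case True
      have "x^2 < ?y^2" using True x by (simp add: power_strict_mono)
      hence "(1 - ?y^2) * (c n * (1 + c n ^ 2)) < (1 - x^2) * (c n * (1 + c n ^ 2))"
        using K by (simp add: mult_strict_right_mono)
      moreover have "x * sqrt (1 + x^2) < ?y * sqrt (1 + ?y^2)" using mono_aux True x by auto
      ultimately show False using ex EQ[OF n] by (simp add: algebra_simps)
    next
      case False
      hence lt: "?y < x" using ne by auto
      have "?y^2 < x^2" using lt P[OF n] by (simp add: power_strict_mono)
      hence "(1 - x^2) * (c n * (1 + c n ^ 2)) < (1 - ?y^2) * (c n * (1 + c n ^ 2))"
        using K by (simp add: mult_strict_right_mono)
      moreover have "?y * sqrt (1 + ?y^2) < x * sqrt (1 + x^2)" using mono_aux lt P[OF n] by auto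
      ultimately show False using ex EQ[OF n] by (simp add: algebra_simps)
    qed
  qed
  have M: "c (n - 1) < c n" if n: "n \<in> {2..N}" for n
  proof (rule ccontr)
    assume "\<not> c (n - 1) < c n"
    hence ge: "c n \<le> c (n - 1)" by simp
    let ?x = "c (n - 1)" and ?c = "c n"
    have c0: "?c > 0" using cpos[of n] n by auto
    have c1: "?c \<le> 1"
    proof (cases "n = N")
      case True thus ?thesis using cN by simp
    next
      case False
      hence "n + 1 \<in> {2..N}" using n by auto
      from P(2)[OF this] show ?thesis by simp
    qed
    have r: "1 + ?c^2 > 0" by (simp add: add_pos_nonneg)
    have "?c^2 \<le> ?x^2" using ge c0 by (simp add: power_mono)
    hence "(1 - ?x^2) * (?c * (1 + ?c^2)) \<le> (1 - ?c^2) * (?c * (1 + ?c^2))"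
      using c0 r by (intro mult_right_mono) auto
    moreover have "?c * sqrt (1 + ?c^2) \<le> ?x * sqrt (1 + ?x^2)"
      using ge c0 mono_aux[of ?c ?x] by (cases "?c = ?x") auto
    moreover have "(1 - ?x^2) * (?c * (1 + ?c^2)) = ?x * sqrt (1 + ?x^2)"
      using EQ[OF n] by (simp only: mult.assoc)
    ultimately have "?c * sqrt (1 + ?c^2) \<le> (1 - ?c^2) * (?c * (1 + ?c^2))"
      by linarith
    hence "?c * sqrt (1 + ?c^2) \<le> ?c * ((1 - ?c^2) * (1 + ?c^2))" by (simp only: ac_simps)
    hence h: "sqrt (1 + ?c^2) \<le> (1 - ?c^2) * (1 + ?c^2)" using c0 by (simp only: mult_le_cancel_left_pos)
    have sq: "sqrt (1 + ?c^2) * sqrt (1 + ?c^2) = 1 + ?c^2" using r by simp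
    have sp: "sqrt (1 + ?c^2) > 0" using r by simp
    have "1 \<le> (1 - ?c^2) * sqrt (1 + ?c^2)"
    proof -
      have "sqrt (1 + ?c^2) * 1 \<le> sqrt (1 + ?c^2) * ((1 - ?c^2) * sqrt (1 + ?c^2))"
        using h sq by (simp add: algebra_simps)
      thus ?thesis using sp by simp
    qed
    hence "1 \<le> ((1 - ?c^2) * sqrt (1 + ?c^2))^2"
      by (rule one_le_power)
    also have "\<dots> = (1 - ?c^2)^2 * (1 + ?c^2)" using r by (simp add: power_mult_distrib)
    finally have f: "1 \<le> (1 - ?c^2)^2 * (1 + ?c^2)" .
    define u where "u = ?c^2"
    have u0: "u > 0" unfolding u_def using c0 by simp
    have u1: "u \<le> 1" unfolding u_def using c0 c1 by (simp add: power_le_one)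
    have f': "1 \<le> (1 - u)^2 * (1 + u)" using f unfolding u_def .
    have ex: "(1 - u)^2 * (1 + u) = 1 - u * u - u * ((1 - u) * (1 + u))"
      by (simp add: power2_eq_square algebra_simps)
    have "(1 - u) * (1 + u) \<ge> 0" using u0 u1 by (intro mult_nonneg_nonneg) auto
    hence "u * ((1 - u) * (1 + u)) \<ge> 0" using u0 by (simp only: mult_nonneg_nonneg less_imp_le)
    moreover have "u * u > 0" using u0 u0 by (rule mult_pos_pos)
    ultimately have lt: "1 - u * u - u * ((1 - u) * (1 + u)) < 1" by (rule aux_lt)
    have le: "1 \<le> 1 - u * u - u * ((1 - u) * (1 + u))" using f' unfolding ex .
    have "(1::real) < 1" using le lt by (rule order_le_less_trans)
    thus False by simp
  qed
  have A: "\<forall>n \<in> {2..N}.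
            c (n - 1) \<in> {0<..<1}
          \<and> (1 - c (n - 1) ^ 2) * c n * (1 + c n ^ 2) = c (n - 1) * sqrt (1 + c (n - 1) ^ 2)
          \<and> (\<forall>x \<in> {0<..<1::real}.
                (1 - x ^ 2) * c n * (1 + c n ^ 2) = x * sqrt (1 + x ^ 2) \<longrightarrow> x = c (n - 1))"
  proof
    fix n assume n: "n \<in> {2..N}"
    show "c (n - 1) \<in> {0<..<1}
          \<and> (1 - c (n - 1) ^ 2) * c n * (1 + c n ^ 2) = c (n - 1) * sqrt (1 + c (n - 1) ^ 2)
          \<and> (\<forall>x \<in> {0<..<1::real}.
                (1 - x ^ 2) * c n * (1 + c n ^ 2) = x * sqrt (1 + x ^ 2) \<longrightarrow> x = c (n - 1))"
    proof (intro conjI ballI impI)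
      show "c (n - 1) \<in> {0<..<1}" using P[OF n] by simp
      show "(1 - c (n - 1) ^ 2) * c n * (1 + c n ^ 2) = c (n - 1) * sqrt (1 + c (n - 1) ^ 2)"
        by (rule EQ[OF n])
      fix x :: real assume "x \<in> {0<..<1}" "(1 - x ^ 2) * c n * (1 + c n ^ 2) = x * sqrt (1 + x ^ 2)"
      then show "x = c (n - 1)" by (rule U[OF n])
    qed
  qed
  have B: "\<forall>n \<in> {2..N}. c (n - 1) < c n" using M by blast
  show ?thesis using A B by (rule conjI)
qed

end
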